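(* For $k\in\{0,1,\dots,N\}$ let $$\Delta_{\mathrm{bin}}(k)=\inf_{\tau\ge 0}\Big[k\int_{-\infty}^{\tau}(u-\tau)^2\phi(u)\,du+(N-k)\int_{\tau}^{\infty}(u-\tau)^2\phi(u)\,du\Big],\qquad \phi(u)=(2\pi)^{-1/2}e^{-u^2/2}.$$ Then (i) $\Delta_{\mathrm{bin}}(k)<N/2$ for all $0\le k<N/2$, and (ii) $\Delta_{\mathrm{bin}}(k)=N/2$ for all $N/2\le k\le N$. *)

theory Defs
  imports "HOL-Probability.Probability"
begin

definition bin_objective :: "nat \<Rightarrow> nat \<Rightarrow> real \<Rightarrow> real" where
  "bin_objective N k \<tau> =
     real k * (LINT u:{..\<tau>}|lborel. (u - \<tau>)\<^sup>2 * std_normal_density u)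
   + (real N - real k) * (LINT u:{\<tau>..}|lborel. (u - \<tau>)\<^sup>2 * std_normal_density u)"

definition Delta_bin :: "nat \<Rightarrow> nat \<Rightarrow> real" where
  "Delta_bin N k = (INF \<tau>\<in>{0..}. bin_objective N k \<tau>)"

end

theory Submission imports Defs begin

lemma half_int:
  fixes h :: "real \<Rightarrow> real"
  assumes int: "integrable lborel h" and ev: "\<And>x. h (-x) = h x"
  shows "(LBINT x:{0..}. h x) = (\<integral>x. h x \<partial>lborel) / 2"
proof -
  have r: "(LBINT x:{..0}. h x) = (LBINT x:{0..}. h x)"
  proof -
    have e: "{x::real. - x \<in> {..0}} = {0..}" by auto
    show ?thesis by (subst set_integral_reflect) (simp only: e ev)
  qed
  have "(LBINT x:{..0}. h x) + (LBINT x:{0..}. h x) = (\<integral>x. h x \<partial>lborel)"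
  proof -
    have ii: "integrable lborel (\<lambda>x. indicator {..0} x *\<^sub>R h x)" "integrable lborel (\<lambda>x. indicator {0..} x *\<^sub>R h x)"
      by (rule integrable_mult_indicator, simp, rule int)+
    have ae: "AE x in lborel. indicator {..0} x *\<^sub>R h x + indicator {0..} x *\<^sub>R h x = h x"
      using AE_lborel_singleton[of "0::real"] by eventually_elim (auto split: split_indicator)
    have "(\<integral>x. indicator {..0} x *\<^sub>R h x \<partial>lborel) + (\<integral>x. indicator {0..} x *\<^sub>R h x \<partial>lborel)
        = (\<integral>x. indicator {..0} x *\<^sub>R h x + indicator {0..} x *\<^sub>R h x \<partial>lborel)"
      using ii by simp
    also have "\<dots> = (\<integral>x. h x \<partial>lborel)"
      using ae ii int by (intro integral_cong_AE) auto
    finally show ?thesis by (simp add: set_lebesgue_integral_def)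
  qed
  with r show ?thesis by simp
qed

lemma phi_even: "std_normal_density (-x) = std_normal_density x"
  by (simp add: std_normal_density_def)

lemma m2: "(\<integral>x. std_normal_density x * x^2 \<partial>lborel) = 1"
  using integral_std_normal_moment_even[of 1] by simp
lemma m1: "(\<integral>x. std_normal_density x * x \<partial>lborel) = 0"
  using integral_std_normal_moment_odd[of 0] by simp
lemma m0: "(\<integral>x. std_normal_density x \<partial>lborel) = 1"
  by simp
lemma ma: "(\<integral>x. std_normal_density x * \<bar>x\<bar> \<partial>lborel) = sqrt (2/pi)"
  using integral_std_normal_moment_abs_odd[of 0] by simp

lemma i0: "integrable lborel std_normal_density" by simp
lemma i1: "integrable lborel (\<lambda>x. std_normal_density x * x)"
  using integrable_std_normal_moment[of 1] by simp
lemma i2: "integrable lborel (\<lambda>x. std_normal_density x * x^2)"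
  using integrable_std_normal_moment[of 2] by simp
lemma ia: "integrable lborel (\<lambda>x. std_normal_density x * \<bar>x\<bar>)"
  using integrable_std_normal_moment_abs[of 1] by simp

lemma h2: "(LBINT x:{0..}. (x - 0)\<^sup>2 * std_normal_density x) = 1/2"
  using half_int[of "\<lambda>x. std_normal_density x * x^2"] i2 m2 phi_even by (simp add: mult.commute)
lemma h2': "(LBINT x:{..0}. (x - 0)\<^sup>2 * std_normal_density x) = 1/2"
proof -
  have e: "{x::real. - x \<in> {..0}} = {0..}" by auto
  show ?thesis using h2 by (subst set_integral_reflect) (simp only: e phi_even, simp)
qed
lemma h0: "(LBINT x:{0..}. std_normal_density x) = 1/2"
  using half_int[of "\<lambda>x. std_normal_density x"] m0 phi_even by simp
lemma h1: "(LBINT x:{0..}. std_normal_density x * x) = sqrt (2/pi) / 2"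
proof -
  have "(LBINT x:{0..}. std_normal_density x * x) = (LBINT x:{0..}. std_normal_density x * \<bar>x\<bar>)"
    unfolding set_lebesgue_integral_def
    by (rule Bochner_Integration.integral_cong) (auto split: split_indicator)
  also have "\<dots> = sqrt (2/pi) / 2"
    using half_int[of "\<lambda>x. std_normal_density x * \<bar>x\<bar>"] ia ma phi_even by simp
  finally show ?thesis .
qed

lemma split_int:
  fixes h :: "real \<Rightarrow> real"
  assumes int: "integrable lborel h"
  shows "(LBINT x:{..t}. h x) + (LBINT x:{t..}. h x) = (\<integral>x. h x \<partial>lborel)"
proof -
  have ii: "integrable lborel (\<lambda>x. indicator {..t} x *\<^sub>R h x)" "integrable lborel (\<lambda>x. indicator {t..} x *\<^sub>R h x)"
    by (rule integrable_mult_indicator, simp, rule int)+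
  have ae: "AE x in lborel. indicator {..t} x *\<^sub>R h x + indicator {t..} x *\<^sub>R h x = h x"
    using AE_lborel_singleton[of t] by eventually_elim (auto split: split_indicator)
  have "(\<integral>x. indicator {..t} x *\<^sub>R h x \<partial>lborel) + (\<integral>x. indicator {t..} x *\<^sub>R h x \<partial>lborel)
      = (\<integral>x. indicator {..t} x *\<^sub>R h x + indicator {t..} x *\<^sub>R h x \<partial>lborel)"
    using ii by simp
  also have "\<dots> = (\<integral>x. h x \<partial>lborel)"
    using ae ii int by (intro integral_cong_AE) auto
  finally show ?thesis by (simp add: set_lebesgue_integral_def)
qed

lemma poly_eq: "(u - t)\<^sup>2 * std_normal_density u =
   std_normal_density u * u^2 - 2 * t * (std_normal_density u * u) + t^2 * std_normal_density u"
  by (simp add: power2_eq_square algebra_simps)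

lemma ipoly: "integrable lborel (\<lambda>u. (u - t)\<^sup>2 * std_normal_density u)"
  unfolding poly_eq using i0 i1 i2 by (intro Bochner_Integration.integrable_add Bochner_Integration.integrable_diff integrable_mult_right) auto

lemma total: "(\<integral>u. (u - t)\<^sup>2 * std_normal_density u \<partial>lborel) = 1 + t^2"
  unfolding poly_eq using i0 i1 i2 m0 m1 m2
  by (subst Bochner_Integration.integral_add Bochner_Integration.integral_diff integral_mult_right, (intro Bochner_Integration.integrable_add Bochner_Integration.integrable_diff integrable_mult_right; simp)+)+ simp

lemma LR: "(LBINT u:{..t}. (u - t)\<^sup>2 * std_normal_density u) + (LBINT u:{t..}. (u - t)\<^sup>2 * std_normal_density u) = 1 + t^2"
  using split_int[OF ipoly, of t t] total by simp

lemma nonneg_set: "0 \<le> (LBINT u:A. (u - t)\<^sup>2 * std_normal_density u)"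
  unfolding set_lebesgue_integral_def
  by (intro integral_nonneg_AE AE_I2) (auto split: split_indicator)

lemma Lbound: assumes "t \<ge> 0" shows "(LBINT u:{..t}. (u - t)\<^sup>2 * std_normal_density u) \<ge> 1/2"
proof -
  have "(LBINT u:{..0}. (u - 0)\<^sup>2 * std_normal_density u) \<le> (LBINT u:{..t}. (u - t)\<^sup>2 * std_normal_density u)"
    unfolding set_lebesgue_integral_def
  proof (rule integral_mono)
    show "integrable lborel (\<lambda>x. indicat_real {..0} x *\<^sub>R ((x - 0)\<^sup>2 * std_normal_density x))"
      by (rule integrable_mult_indicator, simp, rule ipoly)
    show "integrable lborel (\<lambda>x. indicat_real {..t} x *\<^sub>R ((x - t)\<^sup>2 * std_normal_density x))"
      by (rule integrable_mult_indicator, simp, rule ipoly)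
    fix x :: real
    show "indicat_real {..0} x *\<^sub>R ((x - 0)\<^sup>2 * std_normal_density x) \<le> indicat_real {..t} x *\<^sub>R ((x - t)\<^sup>2 * std_normal_density x)"
    proof (cases "x \<le> 0")
      case True
      then have "x\<^sup>2 \<le> (x - t)\<^sup>2" using assms by (intro power_mono_even ) auto
      then show ?thesis using True assms by (auto intro: mult_right_mono)
    next
      case False then show ?thesis by (auto split: split_indicator)
    qed
  qed
  then show ?thesis using h2' by simp
qed

lemma Rbound: assumes "t \<ge> 0" shows "(LBINT u:{t..}. (u - t)\<^sup>2 * std_normal_density u) \<le> 1/2 - 2 * t * (sqrt (2/pi) / 2) + t^2 / 2"
proof -
  have "(LBINT u:{t..}. (u - t)\<^sup>2 * std_normal_density u) \<le> (LBINT u:{0..}. (u - t)\<^sup>2 * std_normal_density u)"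
    unfolding set_lebesgue_integral_def
  proof (rule integral_mono)
    show "integrable lborel (\<lambda>x. indicat_real {0..} x *\<^sub>R ((x - t)\<^sup>2 * std_normal_density x))"
      by (rule integrable_mult_indicator, simp, rule ipoly)
    show "integrable lborel (\<lambda>x. indicat_real {t..} x *\<^sub>R ((x - t)\<^sup>2 * std_normal_density x))"
      by (rule integrable_mult_indicator, simp, rule ipoly)
    fix x :: real
    show "indicat_real {t..} x *\<^sub>R ((x - t)\<^sup>2 * std_normal_density x) \<le> indicat_real {0..} x *\<^sub>R ((x - t)\<^sup>2 * std_normal_density x)"
      using assms by (auto split: split_indicator)
  qed
  also have "(LBINT u:{0..}. (u - t)\<^sup>2 * std_normal_density u) =
     (LBINT u:{0..}. (u - 0)\<^sup>2 * std_normal_density u) - 2 * t * (LBINT u:{0..}. std_normal_density u * u) + t^2 * (LBINT u:{0..}. std_normal_density u)"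
  proof -
    have a: "integrable lborel (\<lambda>x. indicat_real {0..} x *\<^sub>R ((x - 0)\<^sup>2 * std_normal_density x))"
      by (rule integrable_mult_indicator, simp, rule ipoly)
    have b: "integrable lborel (\<lambda>x. indicat_real {0..} x *\<^sub>R (std_normal_density x * x))"
      by (rule integrable_mult_indicator, simp, rule i1)
    have c: "integrable lborel (\<lambda>x. indicat_real {0..} x *\<^sub>R (std_normal_density x))"
      by (rule integrable_mult_indicator, simp, rule i0)
    have e: "(\<lambda>x. indicat_real {0..} x *\<^sub>R ((x - t)\<^sup>2 * std_normal_density x)) =
      (\<lambda>x. indicat_real {0..} x *\<^sub>R ((x - 0)\<^sup>2 * std_normal_density x) - 2 * t * (indicat_real {0..} x *\<^sub>R (std_normal_density x * x)) + t^2 * (indicat_real {0..} x *\<^sub>R (std_normal_density x)))"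
      by (rule ext) (simp add: power2_eq_square algebra_simps)
    show ?thesis unfolding set_lebesgue_integral_def e
      using a b c by simp
  qed
  finally show ?thesis using h2 h1 h0 by simp
qed

lemma obj_ge: assumes "real N / 2 \<le> real k" "k \<le> N" "t \<ge> 0"
  shows "bin_objective N k t \<ge> real N / 2"
proof -
  define L where "L = (LBINT u:{..t}. (u - t)\<^sup>2 * std_normal_density u)"
  define R where "R = (LBINT u:{t..}. (u - t)\<^sup>2 * std_normal_density u)"
  have LR': "L + R = 1 + t^2" using LR unfolding L_def R_def .
  have Lb: "L \<ge> 1/2" using Lbound[OF assms(3)] unfolding L_def .
  have RL: "R = 1 + t^2 - L" using LR' by simp
  have f: "bin_objective N k t = (real N - real k) * (1 + t^2) + (2 * real k - real N) * L"
    unfolding bin_objective_def L_def[symmetric] R_def[symmetric] RL by (simp add: algebra_simps)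
  have "(real N - real k) * (1 + t^2) \<ge> (real N - real k) * 1" using assms(2) by (intro mult_left_mono) auto
  then have "(real N - real k) * (1 + t^2) \<ge> (real N - real k)" by simp
  moreover have "(2 * real k - real N) * L \<ge> (2 * real k - real N) * (1/2)"
    using Lb assms(1) by (intro mult_left_mono) auto
  moreover have "(2 * real k - real N) * (1/2) = real k - real N / 2" by simp
  ultimately show ?thesis unfolding f by linarith
qed

lemma obj_0: "bin_objective N k 0 = real N / 2"
  unfolding bin_objective_def using h2 h2' by (simp add: field_simps)

lemma obj_nonneg: assumes "k \<le> N" shows "bin_objective N k t \<ge> 0"
  unfolding bin_objective_def using assms nonneg_set by (intro add_nonneg_nonneg mult_nonneg_nonneg) auto

theorem proposition2p8:
  fixes N k :: nat
  assumes "k \<le> N"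
  shows "(real k < real N / 2 \<longrightarrow> Delta_bin N k < real N / 2)
       \<and> (real N / 2 \<le> real k \<longrightarrow> Delta_bin N k = real N / 2)"
proof (intro conjI impI)
  have bdd: "bdd_below (bin_objective N k ` {0..})"
    using obj_nonneg[OF assms] by (intro bdd_belowI2[where m=0]) auto
  {
    assume h: "real N / 2 \<le> real k"
    have "Delta_bin N k \<le> bin_objective N k 0"
      unfolding Delta_bin_def by (rule cINF_lower[OF bdd]) auto
    moreover have "Delta_bin N k \<ge> real N / 2"
      unfolding Delta_bin_def using obj_ge[OF h assms] by (intro cINF_greatest) auto
    ultimately show "Delta_bin N k = real N / 2" using obj_0 by simp
  }
  {
    assume h: "real k < real N / 2"
    define c where "c = sqrt (2/pi) / 2"
    define m where "m = real N - 2 * real k"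
    have c0: "c > 0" unfolding c_def by simp
    have m0: "m > 0" "real N > 0" using h unfolding m_def by auto
    define t where "t = c * m / real N"
    have t0: "t \<ge> 0" unfolding t_def using c0 m0 by simp
    define R where "R = (LBINT u:{t..}. (u - t)\<^sup>2 * std_normal_density u)"
    define L where "L = (LBINT u:{..t}. (u - t)\<^sup>2 * std_normal_density u)"
    have LR': "L + R = 1 + t^2" using LR unfolding L_def R_def .
    have Rb: "R \<le> 1/2 - 2 * t * c + t^2/2" using Rbound[OF t0] unfolding R_def c_def .
    have RL: "L = 1 + t^2 - R" using LR' by simp
    have f: "bin_objective N k t = real k * (1 + t^2) + m * R"
      unfolding bin_objective_def L_def[symmetric] R_def[symmetric] m_def RL by (simp add: algebra_simps)
    have "m * R \<le> m * (1/2 - 2 * t * c + t^2/2)" using Rb m0 by (intro mult_left_mono) auto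
    then have "bin_objective N k t \<le> real k * (1 + t^2) + m * (1/2 - 2 * t * c + t^2/2)"
      unfolding f by simp
    also have "\<dots> = real N / 2 - 2 * c * m * t + real N * t^2 / 2"
      unfolding m_def by (simp add: field_simps)
    also have "\<dots> = real N / 2 - (3/2) * (c * m)^2 / real N"
      unfolding t_def using m0 by (simp add: field_simps power2_eq_square)
    also have "\<dots> < real N / 2" using c0 m0 by simp
    finally have "bin_objective N k t < real N / 2" .
    moreover have "Delta_bin N k \<le> bin_objective N k t"
      unfolding Delta_bin_def by (rule cINF_lower[OF bdd]) (use t0 in auto)
    ultimately show "Delta_bin N k < real N / 2" by linarith
  }
qed

end
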